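(* Let $U$ be a finite set and let $f:2^U\to\mathbb{R}$ be non-decreasing and $\varepsilon$-approximately submodular for some $\varepsilon\ge 0$. Let $S\subseteq U$ satisfy: (i) $S$ is a Greedy Maximum Differential Set of $f$ (with respect to the ordering $s_1,\dots,s_{|S|}$); (ii) $f(S)=f_{\max}$; (iii) $\delta_{\min}>0$. Then for every set $C\subseteq U$ with $f(C)=f_{\max}$, $$|S|<\Big(1+\frac{\varepsilon}{\delta_{\min}}+\ln\Big(\frac{\delta_{\max}}{\delta_{\min}}\Big)\Big)\cdot|C|+1 .$$
   Context: For $f:2^U\to\mathbb{R}$, $A\subseteq U$ and $x\in U$, write $\Delta_x f(A)=f(A\cup\{x\})-f(A)$, and $f_{\max}=\max_{X\subseteq U} f(X)$. $f$ is non-decreasing if $A\subseteq B$ implies $f(A)\le f(B)$. $f$ is $\varepsilon$-approximately submodular ($\varepsilon\in[0,\infty)$) if for all $A\subseteq B\subseteq U$ and $x\in U\setminus B$, $\Delta_x f(B)\le \Delta_x f(A)+\varepsilon$. A set $S\subseteq U$ is a Greedy Maximum Differential Set of $f$ if its elements can be ordered $s_1,\dots,s_{|S|}$ such that, with $S_0=\emptyset$ and $S_i=\{s_1,\dots,s_i\}$, for every $i$ we have $\Delta_{s_i}f(S_{i-1})\ge \Delta_u f(S_{i-1})$ for all $u\in U$. For such an ordered $S$: $\delta_{\max}=\Delta_{s_1}f(\emptyset)=\max_{x\in U}\Delta_x f(\emptyset)$ and $\delta_{\min}=\min_{1\le i\le |S|}\Delta_{s_i}f(S_{i-1})$. *)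

theory Defs
  imports "HOL-Analysis.Analysis"
begin

definition delta :: "('a set \<Rightarrow> real) \<Rightarrow> 'a \<Rightarrow> 'a set \<Rightarrow> real" where
  "delta f x A = f (A \<union> {x}) - f A"

definition fmax :: "'a set \<Rightarrow> ('a set \<Rightarrow> real) \<Rightarrow> real" where
  "fmax U f = Max (f ` Pow U)"

definition nondecreasing :: "'a set \<Rightarrow> ('a set \<Rightarrow> real) \<Rightarrow> bool" where
  "nondecreasing U f \<longleftrightarrow> (\<forall>A B. A \<subseteq> B \<and> B \<subseteq> U \<longrightarrow> f A \<le> f B)"

definition approx_submodular :: "'a set \<Rightarrow> ('a set \<Rightarrow> real) \<Rightarrow> real \<Rightarrow> bool" where
  "approx_submodular U f \<epsilon> \<longleftrightarrow>
     (\<forall>A B x. A \<subseteq> B \<and> B \<subseteq> U \<and> x \<in> U - B \<longrightarrow> delta f x B \<le> delta f x A + \<epsilon>)"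

text \<open>The list s = [s_1,...,s_k] is a greedy ordering of the set (set s):
  S_i = set (take i s), and s ! i is the (i+1)-th element s_(i+1).\<close>
definition greedy_max_diff_order :: "'a set \<Rightarrow> ('a set \<Rightarrow> real) \<Rightarrow> 'a list \<Rightarrow> bool" where
  "greedy_max_diff_order U f s \<longleftrightarrow> distinct s \<and> set s \<subseteq> U \<and>
     (\<forall>i < length s. \<forall>u \<in> U. delta f u (set (take i s)) \<le> delta f (s ! i) (set (take i s)))"

definition delta_max :: "'a set \<Rightarrow> ('a set \<Rightarrow> real) \<Rightarrow> real" where
  "delta_max U f = Max ((\<lambda>x. delta f x {}) ` U)"

definition delta_min :: "('a set \<Rightarrow> real) \<Rightarrow> 'a list \<Rightarrow> real" where
  "delta_min f s = Min ((\<lambda>i. delta f (s ! i) (set (take i s))) ` {0..<length s})"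

end

theory Submission
  imports Defs
begin

lemma sum_bound:
  assumes "finite C" "C \<subseteq> U" "A \<subseteq> U" "approx_submodular U f \<epsilon>"
    "\<forall>u\<in>U. delta f u A \<le> D" "0 \<le> D + \<epsilon>"
  shows "f (A \<union> C) - f A \<le> real (card C) * (D + \<epsilon>)"
  using assms(1,2)
proof (induction C rule: finite_induct)
  case empty
  then show ?case by simp
next
  case (insert c C')
  have cU: "c \<in> U" using insert by auto
  have step: "f (A \<union> C' \<union> {c}) - f (A \<union> C') \<le> D + \<epsilon>"
  proof (cases "c \<in> A \<union> C'")
    case True
    then have "A \<union> C' \<union> {c} = A \<union> C'" by auto
    then show ?thesis using assms(6) by simp
  next
    case False
    have ax: "\<forall>A B x. A \<subseteq> B \<and> B \<subseteq> U \<and> x \<in> U - B \<longrightarrow> delta f x B \<le> delta f x A + \<epsilon>"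
      using assms(4) unfolding approx_submodular_def by simp
    have sub: "A \<subseteq> A \<union> C' \<and> A \<union> C' \<subseteq> U \<and> c \<in> U - (A \<union> C')"
      using False cU insert.prems assms(3) by simp
    have "delta f c (A \<union> C') \<le> delta f c A + \<epsilon>"
      using ax[rule_format, OF sub] .
    moreover have "delta f c A \<le> D" using assms(5) cU by simp
    ultimately show ?thesis unfolding delta_def by linarith
  qed
  have IH: "f (A \<union> C') - f A \<le> real (card C') * (D + \<epsilon>)" using insert by auto
  have "A \<union> insert c C' = A \<union> C' \<union> {c}" by auto
  moreover have "card (insert c C') = Suc (card C')" using insert by simp
  ultimately show ?case using step IH by (simp add: algebra_simps)
qed

theorem mainTheorem1:
  fixes U :: "'a set" and f :: "'a set \<Rightarrow> real" and \<epsilon> :: real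
    and s :: "'a list" and C :: "'a set"
  assumes "finite U"
    and "\<epsilon> \<ge> 0"
    and "nondecreasing U f"
    and "approx_submodular U f \<epsilon>"
    and "greedy_max_diff_order U f s"
    and "s \<noteq> []"
    and "f (set s) = fmax U f"
    and "delta_min f s > 0"
    and "C \<subseteq> U"
    and "f C = fmax U f"
  shows "real (length s) <
           (1 + \<epsilon> / delta_min f s + ln (delta_max U f / delta_min f s)) * real (card C) + 1"
proof -
  define k where "k = length s"
  define S where "S i = set (take i s)" for i
  define d where "d i = delta f (s ! i) (S i)" for i
  define g where "g i = f C - f (S i)" for i
  define dm where "dm = delta_min f s"
  define dM where "dM = delta_max U f"
  define m where "m = card C"
  have dm_pos: "dm > 0" using assms(8) dm_def by simp
  have SU: "S i \<subseteq> U" for i using assms(5) unfolding S_def greedy_max_diff_order_def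
    by (meson order_trans set_take_subset)
  have sU: "i < k \<Longrightarrow> s ! i \<in> U" for i using assms(5) unfolding k_def greedy_max_diff_order_def
    by auto
  have greedy: "i < k \<Longrightarrow> u \<in> U \<Longrightarrow> delta f u (S i) \<le> d i" for i u
    using assms(5) unfolding k_def greedy_max_diff_order_def d_def S_def by auto
  have Ssuc: "i < k \<Longrightarrow> S (Suc i) = S i \<union> {s ! i}" for i
    unfolding S_def k_def by (simp add: take_Suc_conv_app_nth)
  have gsuc: "i < k \<Longrightarrow> g (Suc i) = g i - d i" for i
    using Ssuc unfolding g_def d_def delta_def by simp
  have dmin: "i < k \<Longrightarrow> dm \<le> d i" for i
    unfolding dm_def delta_min_def d_def S_def k_def by (rule Min_le) auto
  have gk: "g k = 0" unfolding g_def S_def k_def using assms(7,10) by simp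
  have rem: "real (k - i) * dm \<le> g i" if "i \<le> k" for i
    using that
  proof (induction "k - i" arbitrary: i)
    case 0
    then have "i = k" by simp
    then show ?case using gk by simp
  next
    case (Suc n)
    then have ik: "i < k" by simp
    have "real (k - Suc i) * dm \<le> g (Suc i)" using Suc.hyps(1)[of "Suc i"] Suc.hyps(2) ik by simp
    moreover have "real (k - i) = real (k - Suc i) + 1" using ik by simp
    ultimately show ?case using gsuc[OF ik] dmin[OF ik] by (simp add: algebra_simps)
  qed
  have finC: "finite C" using assms(1,9) finite_subset by blast
  have dnn: "i < k \<Longrightarrow> 0 \<le> d i" for i
    using dmin dm_pos by force
  have key: "g i \<le> real m * (d i + \<epsilon>)" if "i < k" for i
  proof -
    have "f C \<le> f (S i \<union> C)" using assms(3) SU assms(9) unfolding nondecreasing_def by blast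
    moreover have "f (S i \<union> C) - f (S i) \<le> real m * (d i + \<epsilon>)"
      unfolding m_def
      by (rule sum_bound[OF finC assms(9) SU assms(4)]) (use greedy that dnn assms(2) in auto)
    ultimately show ?thesis unfolding g_def by simp
  qed
  have kpos: "k > 0" using assms(6) k_def by simp
  have mpos: "m > 0"
  proof (rule ccontr)
    assume "\<not> m > 0"
    then have "g 0 \<le> 0" using key[OF kpos] by simp
    moreover have "real k * dm \<le> g 0" using rem[of 0] by simp
    moreover have "0 < real k * dm" using kpos dm_pos by simp
    ultimately show False by linarith
  qed
  define q where "q = 1 - 1 / real m"
  have q0: "0 \<le> q" using mpos unfolding q_def by (simp add: field_simps)
  define h where "h i = g i - real m * \<epsilon>" for i
  have hsuc: "h (Suc i) \<le> q * h i" if "i < k" for i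
  proof -
    have "g i / real m - \<epsilon> \<le> d i" using key[OF that] mpos by (simp add: field_simps)
    then have "h (Suc i) \<le> g i - (g i / real m - \<epsilon>) - real m * \<epsilon>"
      unfolding h_def using gsuc[OF that] by linarith
    also have "\<dots> = q * h i" unfolding h_def q_def using mpos
      by (simp add: algebra_simps diff_divide_distrib)
    finally show ?thesis .
  qed
  have d0: "d 0 \<le> dM"
    unfolding dM_def delta_max_def d_def S_def using sU[OF kpos] assms(1) by simp
  have h0: "h 0 \<le> real m * dM"
  proof -
    have "real m * d 0 \<le> real m * dM" using d0 by (simp add: mult_left_mono)
    then show ?thesis using key[OF kpos] unfolding h_def by (simp add: algebra_simps)
  qed
  have hi: "h i \<le> q ^ i * (real m * dM)" if "i \<le> k" for i
    using that
  proof (induction i)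
    case 0 then show ?case using h0 by simp
  next
    case (Suc i)
    then have "h (Suc i) \<le> q * h i" using hsuc by simp
    also have "\<dots> \<le> q * (q ^ i * (real m * dM))" using Suc q0 by (simp add: mult_left_mono)
    finally show ?case by simp
  qed
  have qexp: "q ^ i \<le> exp (- real i / real m)" for i
  proof -
    have "q \<le> exp (- 1 / real m)" unfolding q_def using exp_ge_add_one_self[of "-1/real m"] by simp
    then have "q ^ i \<le> exp (- 1 / real m) ^ i" using q0 power_mono by blast
    also have "\<dots> = exp (- real i / real m)" by (simp add: exp_of_nat_mult[symmetric])
    finally show ?thesis .
  qed
  have dmdM: "dm \<le> dM" using dmin[OF kpos] d0 by simp
  define r where "r = dM / dm"
  have r1: "r \<ge> 1" unfolding r_def using dmdM dm_pos by simp
  define L where "L = ln r"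
  have L0: "L \<ge> 0" unfolding L_def using r1 by simp
  define i where "i = nat \<lceil>real m * L\<rceil>"
  have mL0: "0 \<le> real m * L" using L0 by simp
  have ic: "real i = of_int \<lceil>real m * L\<rceil>" unfolding i_def using mL0 by simp
  have i1: "real i < real m * L + 1" using ic ceiling_correct[of "real m * L"] by linarith
  have i2: "real m * L \<le> real i" using ic ceiling_correct[of "real m * L"] by linarith
  have rhs: "real m * L + 1 \<le> (1 + \<epsilon> / dm + L) * real m + 1"
    using assms(2) dm_pos mpos by (simp add: algebra_simps)
  show ?thesis
  proof (cases "k < i")
    case True
    then have "real k < real m * L + 1" using i1 by linarith
    then show ?thesis using rhs unfolding dm_def[symmetric] dM_def[symmetric] r_def[symmetric]
        L_def[symmetric] m_def[symmetric] k_def[symmetric] by linarith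
  next
    case False
    then have ik: "i \<le> k" by simp
    have e: "exp (- real i / real m) \<le> 1 / r"
    proof -
      have "- real i / real m \<le> - L" using i2 mpos by (simp add: field_simps)
      then have "exp (- real i / real m) \<le> exp (- L)" by simp
      also have "\<dots> = 1 / r" unfolding L_def using r1 by (simp add: exp_minus divide_inverse)
      finally show ?thesis .
    qed
    have "real (k - i) * dm \<le> g i" using rem[OF ik] .
    also have "\<dots> = h i + real m * \<epsilon>" unfolding h_def by simp
    also have "\<dots> \<le> q ^ i * (real m * dM) + real m * \<epsilon>" using hi[OF ik] by simp
    also have "\<dots> \<le> (1 / r) * (real m * dM) + real m * \<epsilon>"
    proof -
      have "q ^ i \<le> 1 / r" using qexp[of i] e by linarith
      moreover have "0 \<le> real m * dM" using dmdM dm_pos by simp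
      ultimately have "q ^ i * (real m * dM) \<le> (1 / r) * (real m * dM)" by (rule mult_right_mono)
      then show ?thesis by simp
    qed
    also have "\<dots> = real m * dm + real m * \<epsilon>" unfolding r_def using dm_pos dmdM by simp
    finally have "real (k - i) * dm \<le> real m * dm + real m * \<epsilon>" .
    then have "real (k - i) \<le> real m + real m * \<epsilon> / dm" using dm_pos
      by (simp add: field_simps)
    then have "real k \<le> real i + real m + real m * \<epsilon> / dm" using ik by simp
    then have "real k < real m * L + 1 + real m + real m * \<epsilon> / dm" using i1 by linarith
    moreover have "real m * L + 1 + real m + real m * \<epsilon> / dm = (1 + \<epsilon> / dm + L) * real m + 1"
      by (simp add: algebra_simps)
    ultimately show ?thesis unfolding dm_def dM_def r_def L_def m_def k_def by simp
  qed
qed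

end
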